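(* Let $\alpha,\beta,\gamma,x\in\mathbb{N}_0$ with $(\alpha,\beta,\gamma,x)\neq(0,0,0,0)$, let $\lambda$ be a nonnegative integer and $n$ a nonnegative integer. Then $$A^{\lambda,x}_{n+1}(\alpha,\beta,\gamma)=\gamma\, A^{\lambda,x}_{n}(\alpha,\beta,\gamma+\alpha)+\sum_{k=0}^{n}\binom{n}{k}A^{0,x}_k(\alpha,\beta,\gamma)\,A^{\lambda,x}_{n-k+1}(\alpha,\beta,0).$$
   Context: For a number $t$ and $\alpha$, the generalised factorial is $(t|\alpha)_n=\prod_{j=0}^{n-1}(t-j\alpha)$ for $n\ge 1$ and $(t|\alpha)_0=1$. For parameters $\alpha,\beta,\gamma$, the generalised Stirling numbers $S(n,k,\alpha,\beta,\gamma)$ ($0\le k\le n$) are defined by the polynomial identity $(t|\alpha)_n=\sum_{k=0}^{n}S(n,k,\alpha,\beta,\gamma)\,(t-\gamma|\beta)_k$ in the variable $t$. For a nonnegative integer $\lambda$ put $\binom{k+\lambda-1}{k}=\lambda(\lambda+1)\cdots(\lambda+k-1)/k!$ (equal to $1$ for $k=0$, and for $\lambda=0$ equal to $0$ for $k\ge1$). Define $$A^{\lambda,x}_n(\alpha,\beta,\gamma)=\sum_{k=0}^{n}\binom{k+\lambda-1}{k}(-1)^{n+k}\beta^k k!\,S(n,k,\alpha,-\beta,-\gamma)\,x^k .$$ *)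

theory Defs
  imports Complex_Main
begin

definition gfact :: "real \<Rightarrow> real \<Rightarrow> nat \<Rightarrow> real" where
  "gfact t a n = (\<Prod>j<n. (t - of_nat j * a))"

definition stirS :: "nat \<Rightarrow> nat \<Rightarrow> real \<Rightarrow> real \<Rightarrow> real \<Rightarrow> real" where
  "stirS n k a b g =
     (THE c :: nat \<Rightarrow> real. (\<forall>i>n. c i = 0) \<and>
        (\<forall>t. gfact t a n = (\<Sum>i\<le>n. c i * gfact (t - g) b i))) k"

text \<open>binom(k+lambda-1, k) = lambda(lambda+1)...(lambda+k-1)/k!\<close>
definition multichoose :: "nat \<Rightarrow> nat \<Rightarrow> real" where
  "multichoose lam k = pochhammer (real lam) k / fact k"

definition Apoly :: "nat \<Rightarrow> real \<Rightarrow> nat \<Rightarrow> real \<Rightarrow> real \<Rightarrow> real \<Rightarrow> real" where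
  "Apoly lam x n a b g =
     (\<Sum>k\<le>n. multichoose lam k * (-1) ^ (n + k) * b ^ k * fact k
              * stirS n k a (- b) (- g) * x ^ k)"

end

theory Submission
  imports Defs "HOL-Computational_Algebra.Polynomial"
begin

lemma gfact_0[simp]: "gfact t a 0 = 1" by (simp add: gfact_def)

lemma gfact_Suc: "gfact t a (Suc n) = gfact t a n * (t - of_nat n * a)"
  by (simp add: gfact_def)

lemma gfact_Suc': "gfact t a (Suc n) = t * gfact (t - a) a n"
  unfolding gfact_def prod.lessThan_Suc_shift
  by (simp add: algebra_simps del: prod.lessThan_Suc)

lemma gfact_vdm:
  "gfact (x + y) c n = (\<Sum>k\<le>n. of_nat (n choose k) * gfact x c k * gfact y c (n - k))"
proof (induction n arbitrary: x y)
  case 0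
  then show ?case by simp
next
  case (Suc n x y)
  have "(\<Sum>k\<le>Suc n. of_nat (Suc n choose k) * gfact x c k * gfact y c (Suc n - k)) =
      (\<Sum>i\<le>n. of_nat (n choose i) * gfact x c (Suc i) * gfact y c (n - i)) +
      ((\<Sum>i\<le>n. of_nat (n choose Suc i) * gfact x c (Suc i) * gfact y c (n - i)) +
      gfact y c (Suc n))"
    by (subst sum.atMost_Suc_shift) (simp add: ring_distribs sum.distrib)
  also have "(\<Sum>i\<le>n. of_nat (n choose i) * gfact x c (Suc i) * gfact y c (n - i)) =
      x * gfact ((x - c) + y) c n"
    by (subst Suc) (simp add: sum_distrib_left gfact_Suc' mult_ac)
  also have "(\<Sum>i\<le>n. of_nat(n choose Suc i) * gfact x c (Suc i) * gfact y c (n-i)) + gfact y c (Suc n)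
           = of_nat (n choose 0) * gfact x c 0 * gfact y c (Suc n - 0) 
           + (\<Sum>i = Suc 0..Suc n. of_nat (n choose i) * gfact x c i * gfact y c (Suc n - i))"
    unfolding sum.shift_bounds_cl_Suc_ivl by (simp add: atLeast0AtMost)
  also have "\<dots> = (\<Sum>i=0..Suc n. of_nat (n choose i) * gfact x c i * gfact y c (Suc n - i))"
    by (simp add: sum.atLeast_Suc_atMost)
  also have "\<dots> = (\<Sum>i\<le>n. of_nat (n choose i) * gfact x c i * gfact y c (Suc n - i))"
    using Suc by (intro sum.mono_neutral_right) (auto simp: not_le binomial_eq_0)
  also have "\<dots> = (\<Sum>i\<le>n. of_nat (n choose i) * gfact x c i * gfact y c (Suc (n - i)))"
    by (simp add: Suc_diff_le)
  also have "\<dots> = y * gfact (x + (y - c)) c n"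
    by (subst Suc) (simp add: sum_distrib_left mult_ac gfact_Suc')
  also have "x * gfact ((x - c) + y) c n + y * gfact (x + (y - c)) c n =
      gfact (x + y) c (Suc n)"
    by (simp add: gfact_Suc' algebra_simps)
  finally show ?case ..
qed

lemma key_gfact:
  "gfact t a (Suc n) = - g * gfact (t - a) a n
     + (\<Sum>j\<le>n. of_nat (n choose j) * gfact (-g) a j * gfact (t+g) a (n-j+1))"
proof -
  have "gfact t a (Suc n) = (-g) * gfact (t - a) a n + (t + g) * gfact ((-g) + (t + g - a)) a n"
    by (simp add: gfact_Suc' algebra_simps)
  also have "(t + g) * gfact ((-g) + (t + g - a)) a n
     = (\<Sum>j\<le>n. of_nat (n choose j) * gfact (-g) a j * gfact (t+g) a (n-j+1))"
    by (subst gfact_vdm) (simp add: sum_distrib_left gfact_Suc' mult_ac)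
  finally show ?thesis by simp
qed

definition gp :: "real \<Rightarrow> nat \<Rightarrow> real poly" where
  "gp b i = (\<Prod>j<i. [:- of_nat j * b, 1:])"

lemma poly_gp: "poly (gp b i) t = gfact t b i"
  by (simp add: gp_def gfact_def poly_prod)

lemma gp_deg: "degree (gp b i) = i \<and> coeff (gp b i) i = 1"
proof (induction i)
  case 0
  then show ?case by (simp add: gp_def)
next
  case (Suc i)
  have e: "gp b (Suc i) = gp b i * [:- of_nat i * b, 1:]" by (simp add: gp_def)
  have nz: "gp b i \<noteq> 0" using Suc by auto
  have d: "degree (gp b (Suc i)) = Suc i" unfolding e
    by (subst degree_mult_eq) (use nz Suc in auto)
  have "coeff (gp b (Suc i)) (Suc i) = 1"
    using coeff_mult_degree_sum[of "gp b i" "[:- of_nat i * b, 1:]"] Suc unfolding e by simp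
  then show ?case using d by simp
qed

lemma uniq_top:
  assumes "\<forall>t. (\<Sum>i\<le>N. c i * gfact t b i) = 0"
  shows "c N = 0"
proof -
  define Q where "Q = (\<Sum>i\<le>N. smult (c i) (gp b i))"
  have "poly Q t = 0" for t
  proof -
    have "poly Q t = (\<Sum>i\<le>N. c i * gfact t b i)"
      unfolding Q_def poly_sum by (simp add: poly_gp)
    then show ?thesis using assms by simp
  qed
  then have "Q = 0" using poly_all_0_iff_0 by blast
  then have "0 = coeff Q N" by simp
  also have "\<dots> = (\<Sum>i\<le>N. c i * coeff (gp b i) N)" unfolding Q_def coeff_sum by simp
  also have "\<dots> = (\<Sum>i\<in>{N}. c i * coeff (gp b i) N)"
  proof (rule sum.mono_neutral_right)
    show "\<forall>i\<in>{..N} - {N}. c i * coeff (gp b i) N = 0"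
    proof
      fix i assume "i \<in> {..N} - {N}"
      then have "degree (gp b i) < N" using gp_deg[of b i] by auto
      then show "c i * coeff (gp b i) N = 0" by (simp add: coeff_eq_0)
    qed
  qed auto
  also have "\<dots> = c N" using gp_deg[of b N] by simp
  finally show ?thesis by simp
qed

lemma uniq:
  assumes "\<forall>t. (\<Sum>i\<le>N. c i * gfact t b i) = 0" "i \<le> N"
  shows "c i = 0"
  using assms
proof (induction N)
  case 0
  have "c 0 = 0" by (rule uniq_top[where N=0 and c=c and b=b]) (use 0 in blast)
  then show ?case using 0 by simp
next
  case (Suc N)
  have cs: "c (Suc N) = 0" using uniq_top[where N="Suc N" and c=c and b=b] Suc.prems(1) by blast
  have h: "\<forall>t. (\<Sum>i\<le>N. c i * gfact t b i) = 0"
  proof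
    fix t
    have "(\<Sum>i\<le>Suc N. c i * gfact t b i) = 0" using Suc.prems(1) by blast
    then show "(\<Sum>i\<le>N. c i * gfact t b i) = 0" using cs by simp
  qed
  then show ?case
  proof (cases "i = Suc N")
    case True
    then show ?thesis using cs by simp
  next
    case False
    then have "i \<le> N" using Suc.prems(2) by simp
    then show ?thesis using Suc.IH h by blast
  qed
qed

lemma stir_ex: "\<exists>c. (\<forall>i>n. c i = 0) \<and> (\<forall>t. gfact t a n = (\<Sum>i\<le>n. c i * gfact (t - g) b i))"
proof (induction n)
  case 0
  show ?case by (rule exI[of _ "\<lambda>i. if i = 0 then 1 else 0"]) auto
next
  case (Suc n)
  then obtain c where c0: "\<forall>i>n. c i = 0"
    and c1: "\<forall>t. gfact t a n = (\<Sum>i\<le>n. c i * gfact (t - g) b i)" by blast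
  define d where "d i = (if i = 0 then 0 else c (i - 1)) + (g + of_nat i * b - of_nat n * a) * c i" for i
  show ?case
  proof (rule exI[of _ d], intro conjI allI impI)
    fix i assume "i > Suc n" then show "d i = 0" using c0 by (simp add: d_def)
  next
    fix t
    have "gfact t a (Suc n) = (\<Sum>i\<le>n. c i * gfact (t - g) b i * (((t - g) - of_nat i * b) + (g + of_nat i * b - of_nat n * a)))"
      by (simp add: gfact_Suc c1 sum_distrib_right)
    also have "\<dots> = (\<Sum>i\<le>n. c i * gfact (t - g) b (Suc i)) + (\<Sum>i\<le>n. (g + of_nat i * b - of_nat n * a) * c i * gfact (t - g) b i)"
      unfolding sum.distrib[symmetric] by (rule sum.cong) (simp_all add: gfact_Suc algebra_simps)
    also have "\<dots> = (\<Sum>i\<le>Suc n. d i * gfact (t - g) b i)"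
    proof -
      have "(\<Sum>i\<le>Suc n. d i * gfact (t - g) b i) = (\<Sum>i\<le>Suc n. (if i = 0 then 0 else c (i - 1)) * gfact (t - g) b i)
         + (\<Sum>i\<le>Suc n. (g + of_nat i * b - of_nat n * a) * c i * gfact (t - g) b i)"
        unfolding sum.distrib[symmetric] by (rule sum.cong) (simp_all add: d_def algebra_simps)
      also have "(\<Sum>i\<le>Suc n. (if i = 0 then 0 else c (i - 1)) * gfact (t - g) b i) = (\<Sum>i\<le>n. c i * gfact (t - g) b (Suc i))"
        by (subst sum.atMost_Suc_shift) simp
      also have "(\<Sum>i\<le>Suc n. (g + of_nat i * b - of_nat n * a) * c i * gfact (t - g) b i) = (\<Sum>i\<le>n. (g + of_nat i * b - of_nat n * a) * c i * gfact (t - g) b i)"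
        using c0 by simp
      finally show ?thesis by simp
    qed
    finally show "gfact t a (Suc n) = (\<Sum>i\<le>Suc n. d i * gfact (t - g) b i)" .
  qed
qed

lemma stirS_eq:
  assumes c0: "\<forall>i>n. c i = 0" and c1: "\<forall>t. gfact t a n = (\<Sum>i\<le>n. c i * gfact (t - g) b i)"
  shows "stirS n k a b g = c k"
proof -
  have "(THE c :: nat \<Rightarrow> real. (\<forall>i>n. c i = 0) \<and>
        (\<forall>t. gfact t a n = (\<Sum>i\<le>n. c i * gfact (t - g) b i))) = c"
  proof (rule the_equality)
    fix d assume d: "(\<forall>i>n. d i = 0) \<and> (\<forall>t. gfact t a n = (\<Sum>i\<le>n. d i * gfact (t - g) b i))"
    have h: "\<forall>s. (\<Sum>i\<le>n. (d i - c i) * gfact s b i) = 0"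
    proof
      fix s
      have "(\<Sum>i\<le>n. (d i - c i) * gfact s b i) = (\<Sum>i\<le>n. d i * gfact ((s + g) - g) b i) - (\<Sum>i\<le>n. c i * gfact ((s+g) - g) b i)"
        by (simp add: sum_subtractf algebra_simps)
      also have "\<dots> = 0"
      proof -
        have e1: "gfact (s+g) a n = (\<Sum>i\<le>n. d i * gfact ((s + g) - g) b i)" using d by blast
        have e2: "gfact (s+g) a n = (\<Sum>i\<le>n. c i * gfact ((s + g) - g) b i)" using c1 by blast
        show ?thesis using e1 e2 by simp
      qed
      finally show "(\<Sum>i\<le>n. (d i - c i) * gfact s b i) = 0" .
    qed
    show "d = c"
    proof
      fix i show "d i = c i"
        using uniq[OF h, of i] d c0 by (cases "i \<le> n") auto
    qed
  qed (use assms in auto)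
  then show ?thesis unfolding stirS_def by simp
qed

lemma stirS_props: "(\<forall>i>n. stirS n i a b g = 0) \<and> (\<forall>t. gfact t a n = (\<Sum>i\<le>n. stirS n i a b g * gfact (t - g) b i))"
proof -
  obtain c where c: "(\<forall>i>n. c i = 0) \<and> (\<forall>t. gfact t a n = (\<Sum>i\<le>n. c i * gfact (t - g) b i))"
    using stir_ex by blast
  then have "stirS n i a b g = c i" for i using stirS_eq by blast
  then show ?thesis using c by simp
qed

lemma rep_ext:
  assumes "m \<le> M"
  shows "(\<Sum>k\<le>M. stirS m k a b g * gfact (t - g) b k) = gfact t a m"
proof -
  have "(\<Sum>k\<le>M. stirS m k a b g * gfact (t - g) b k) = (\<Sum>k\<le>m. stirS m k a b g * gfact (t - g) b k)"
    using assms stirS_props[of m a b g] by (intro sum.mono_neutral_right) auto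
  also have "\<dots> = gfact t a m" using stirS_props[of m a b g] by simp
  finally show ?thesis .
qed

lemma stirS_zero: "k > m \<Longrightarrow> stirS m k a b g = 0"
  using stirS_props by blast

lemma gfact_zero: "k > 0 \<Longrightarrow> gfact 0 c k = 0"
  unfolding gfact_def by (rule prod_zero) auto

lemma stirS_0: "stirS m 0 a b g = gfact g a m"
proof -
  have "gfact g a m = (\<Sum>k\<le>m. stirS m k a b g * gfact (g - g) b k)"
    using stirS_props[of m a b g] by blast
  also have "\<dots> = (\<Sum>k\<in>{0}. stirS m k a b g * gfact (g - g) b k)"
    by (intro sum.mono_neutral_right) (auto simp: gfact_zero)
  finally show ?thesis by simp
qed

lemma coef_id:
  "stirS (Suc n) k a (-b) (-g) = - g * stirS n k a (-b) (-(g+a))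
     + (\<Sum>j\<le>n. of_nat (n choose j) * gfact (-g) a j * stirS (n-j+1) k a (-b) 0)"
proof -
  define c where "c k = - g * stirS n k a (-b) (-(g+a))
     + (\<Sum>j\<le>n. of_nat (n choose j) * gfact (-g) a j * stirS (n-j+1) k a (-b) 0)" for k
  have "stirS (Suc n) k a (-b) (-g) = c k"
  proof (rule stirS_eq)
    show "\<forall>i>Suc n. c i = 0" by (auto simp: c_def stirS_zero)
    show "\<forall>t. gfact t a (Suc n) = (\<Sum>i\<le>Suc n. c i * gfact (t - - g) (- b) i)"
    proof
      fix t
      have "(\<Sum>i\<le>Suc n. c i * gfact (t - - g) (- b) i)
        = - g * (\<Sum>i\<le>Suc n. stirS n i a (-b) (-(g+a)) * gfact (t - - g) (- b) i)
          + (\<Sum>j\<le>n. of_nat (n choose j) * gfact (-g) a j * (\<Sum>i\<le>Suc n. stirS (n-j+1) i a (-b) 0 * gfact (t - - g) (- b) i))"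
      proof -
        have "(\<Sum>i\<le>Suc n. c i * gfact (t - - g) (- b) i)
          = (\<Sum>i\<le>Suc n. - g * (stirS n i a (-b) (-(g+a)) * gfact (t - - g) (- b) i))
           + (\<Sum>i\<le>Suc n. \<Sum>j\<le>n. of_nat (n choose j) * gfact (-g) a j * (stirS (n-j+1) i a (-b) 0 * gfact (t - - g) (- b) i))"
          unfolding sum.distrib[symmetric]
          by (rule sum.cong) (simp_all only: c_def distrib_right sum_distrib_right mult.assoc)
        also have "\<dots> = - g * (\<Sum>i\<le>Suc n. stirS n i a (-b) (-(g+a)) * gfact (t - - g) (- b) i)
          + (\<Sum>j\<le>n. of_nat (n choose j) * gfact (-g) a j * (\<Sum>i\<le>Suc n. stirS (n-j+1) i a (-b) 0 * gfact (t - - g) (- b) i))"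
          by (subst sum.swap) (simp only: sum_distrib_left)
        finally show ?thesis .
      qed
      also have "(\<Sum>i\<le>Suc n. stirS n i a (-b) (-(g+a)) * gfact (t - - g) (- b) i) = gfact (t - a) a n"
      proof -
        have "t - - g = (t - a) - (-(g+a))" by simp
        then show ?thesis using rep_ext[of n "Suc n" a "-b" "-(g+a)" "t - a"] by simp
      qed
      also have "(\<Sum>j\<le>n. of_nat (n choose j) * gfact (-g) a j * (\<Sum>i\<le>Suc n. stirS (n-j+1) i a (-b) 0 * gfact (t - - g) (- b) i))
          = (\<Sum>j\<le>n. of_nat (n choose j) * gfact (-g) a j * gfact (t + g) a (n-j+1))"
      proof (rule sum.cong)
        fix j assume "j \<in> {..n}"
        then have "n - j + 1 \<le> Suc n" by simp
        then have "(\<Sum>i\<le>Suc n. stirS (n-j+1) i a (-b) 0 * gfact ((t + g) - 0) (- b) i) = gfact (t + g) a (n-j+1)"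
          by (rule rep_ext)
        then show "of_nat (n choose j) * gfact (-g) a j * (\<Sum>i\<le>Suc n. stirS (n-j+1) i a (-b) 0 * gfact (t - - g) (- b) i)
          = of_nat (n choose j) * gfact (-g) a j * gfact (t + g) a (n-j+1)" by simp
      qed simp
      finally show "gfact t a (Suc n) = (\<Sum>i\<le>Suc n. c i * gfact (t - - g) (- b) i)"
        using key_gfact[of t a n g] by simp
    qed
  qed
  then show ?thesis by (simp add: c_def)
qed

lemma apoly_alt:
  assumes "m \<le> M"
  shows "Apoly lam x m a b g = (\<Sum>k\<le>M. (-1) ^ (m + k) * (multichoose lam k * b ^ k * fact k * x ^ k) * stirS m k a (-b) (-g))"
proof -
  have "Apoly lam x m a b g = (\<Sum>k\<le>m. (-1) ^ (m + k) * (multichoose lam k * b ^ k * fact k * x ^ k) * stirS m k a (-b) (-g))"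
    unfolding Apoly_def by (rule sum.cong) (simp_all add: mult_ac)
  also have "\<dots> = (\<Sum>k\<le>M. (-1) ^ (m + k) * (multichoose lam k * b ^ k * fact k * x ^ k) * stirS m k a (-b) (-g))"
    using assms by (intro sum.mono_neutral_left) (auto simp: stirS_zero)
  finally show ?thesis .
qed

lemma apoly0: "Apoly 0 x j a b g = (-1) ^ j * gfact (-g) a j"
proof -
  have "Apoly 0 x j a b g = (\<Sum>k\<in>{0}. multichoose 0 k * (-1) ^ (j + k) * b ^ k * fact k
              * stirS j k a (- b) (- g) * x ^ k)"
    unfolding Apoly_def
    by (intro sum.mono_neutral_right) (auto simp: multichoose_def pochhammer_0_left)
  also have "\<dots> = (-1) ^ j * gfact (-g) a j" by (simp add: multichoose_def stirS_0)
  finally show ?thesis .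
qed

lemma main_real:
  "Apoly lam x (Suc n) a b g =
           g * Apoly lam x n a b (g + a)
         + (\<Sum>k\<le>n. real (n choose k) * Apoly 0 x k a b g
                     * Apoly lam x (n - k + 1) a b 0)"
proof -
  define W where "W k = multichoose lam k * b ^ k * fact k * x ^ k" for k
  have "Apoly lam x (Suc n) a b g = (\<Sum>k\<le>Suc n. (-1) ^ (Suc n + k) * W k * stirS (Suc n) k a (-b) (-g))"
    unfolding W_def by (rule apoly_alt) simp
  also have "\<dots> = (\<Sum>k\<le>Suc n. g * ((-1) ^ (n + k) * W k * stirS n k a (-b) (-(g+a))))
     + (\<Sum>k\<le>Suc n. \<Sum>j\<le>n. of_nat (n choose j) * ((-1) ^ j * gfact (-g) a j) * ((-1) ^ (n - j + 1 + k) * W k * stirS (n-j+1) k a (-b) (-0)))"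
    unfolding sum.distrib[symmetric]
  proof (rule sum.cong)
    fix k assume "k \<in> {..Suc n}"
    have sg: "(-1::real) ^ (Suc n + k) = (-1) ^ j * (-1) ^ (n - j + 1 + k)" if "j \<le> n" for j
    proof -
      have "Suc n + k = j + (n - j + 1 + k)" using that by simp
      then show ?thesis by (simp only: power_add)
    qed
    have "(-1) ^ (Suc n + k) * W k * stirS (Suc n) k a (-b) (-g)
      = (-1) ^ (Suc n + k) * W k * (- g * stirS n k a (-b) (-(g+a)))
        + (\<Sum>j\<le>n. (-1) ^ (Suc n + k) * W k * (of_nat (n choose j) * gfact (-g) a j * stirS (n-j+1) k a (-b) 0))"
      by (subst coef_id) (simp only: distrib_left sum_distrib_left)
    also have "(\<Sum>j\<le>n. (-1) ^ (Suc n + k) * W k * (of_nat (n choose j) * gfact (-g) a j * stirS (n-j+1) k a (-b) 0))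
       = (\<Sum>j\<le>n. of_nat (n choose j) * ((-1) ^ j * gfact (-g) a j) * ((-1) ^ (n - j + 1 + k) * W k * stirS (n-j+1) k a (-b) (-0)))"
    proof (rule sum.cong)
      fix j assume "j \<in> {..n}"
      then have sgj: "(-1::real) ^ (Suc n + k) = (-1) ^ j * (-1) ^ (n - j + 1 + k)" using sg by simp
      show "(-1) ^ (Suc n + k) * W k * (of_nat (n choose j) * gfact (-g) a j * stirS (n-j+1) k a (-b) 0)
       = of_nat (n choose j) * ((-1) ^ j * gfact (-g) a j) * ((-1) ^ (n - j + 1 + k) * W k * stirS (n-j+1) k a (-b) (-0))"
        by (simp only: sgj minus_zero mult_ac)
    qed simp
    finally show "(-1) ^ (Suc n + k) * W k * stirS (Suc n) k a (-b) (-g) =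
         g * ((-1) ^ (n + k) * W k * stirS n k a (-b) (-(g+a))) +
         (\<Sum>j\<le>n. of_nat (n choose j) * ((-1) ^ j * gfact (-g) a j) * ((-1) ^ (n - j + 1 + k) * W k * stirS (n-j+1) k a (-b) (-0)))"
      by (simp add: mult_ac)
  qed simp
  also have "(\<Sum>k\<le>Suc n. g * ((-1) ^ (n + k) * W k * stirS n k a (-b) (-(g+a)))) = g * Apoly lam x n a b (g + a)"
    unfolding sum_distrib_left[symmetric] W_def by (subst apoly_alt[of n "Suc n"]) simp_all
  also have "(\<Sum>k\<le>Suc n. \<Sum>j\<le>n. of_nat (n choose j) * ((-1) ^ j * gfact (-g) a j) * ((-1) ^ (n - j + 1 + k) * W k * stirS (n-j+1) k a (-b) (-0)))
     = (\<Sum>j\<le>n. real (n choose j) * Apoly 0 x j a b g * Apoly lam x (n - j + 1) a b 0)"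
    apply (subst sum.swap)
    apply (rule sum.cong)
     apply simp
    apply (simp only: apoly0 sum_distrib_left[symmetric])
    apply (subst apoly_alt[of "n - _ + 1" "Suc n"])
     apply simp
    apply (simp only: W_def)
    done
  finally show ?thesis .
qed

theorem theorem3:
  fixes a b g x lam n :: nat
  assumes "(a, b, g, x) \<noteq> (0, 0, 0, 0)"
  shows "Apoly lam (real x) (Suc n) (real a) (real b) (real g) =
           real g * Apoly lam (real x) n (real a) (real b) (real g + real a)
         + (\<Sum>k\<le>n. real (n choose k) * Apoly 0 (real x) k (real a) (real b) (real g)
                     * Apoly lam (real x) (n - k + 1) (real a) (real b) 0)"
  by (rule main_real)

end
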